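(* Let $X_\ell, X_{\ell-1}$ be random vectors in $\mathbb{R}^m$ with $\|X_\ell\|_2 = \|X_{\ell-1}\|_2 = 1$ almost surely, and let $Z$ be a square-integrable random vector in $\mathbb{R}^d$, all on a common probability space. Let $\rho(x,y) = 1 - \frac{\langle x, y\rangle}{\|x\|\|y\|}$ be the cosine distance, and let $\epsilon>0$ with $\mathbb{E}[\rho(X_\ell, X_{\ell-1})] < \frac{\epsilon}{2}$. Assume that the function $$h(x,y) = \mathbb{E}[Z \mid X_\ell = x, X_{\ell-1} = y]$$ is $\alpha$-Lipschitz in its first argument and $\beta$-Lipschitz in its second argument (with respect to Euclidean norms). Then $$\mathbb{E}\big[\|\mathbb{E}[Z\mid X_\ell] - \mathbb{E}[Z\mid X_{\ell-1}]\|_2^2\big] < 2(\alpha^2+\beta^2)\epsilon.$$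
   Context: Here $X_\ell, X_{\ell-1}$ model (normalized) hidden representations of two adjacent layers of a network and $Z$ a task variable. The conditional expectations $\mathbb{E}[Z\mid X_\ell]$, $\mathbb{E}[Z\mid X_{\ell-1}]$ are the usual (minimum mean-squared-error) conditional expectations. *)

theory Defs
  imports "HOL-Analysis.Analysis" "HOL-Probability.Probability"
begin

definition cos_dist :: "real^'m \<Rightarrow> real^'m \<Rightarrow> real" where
  "cos_dist x y = 1 - inner x y / (norm x * norm y)"

definition cond_exp_vec ::
  "'a measure \<Rightarrow> ('a \<Rightarrow> 'b::topological_space) \<Rightarrow> ('a \<Rightarrow> real^'d) \<Rightarrow> 'a \<Rightarrow> real^'d" where
  "cond_exp_vec M X Z = (\<lambda>\<omega>. \<chi> i. real_cond_exp M (vimage_algebra (space M) X borel) (\<lambda>\<omega>'. Z \<omega>' $ i) \<omega>)"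

end

theory Submission imports Defs begin

lemma L2_prod:
  fixes a b :: "'a \<Rightarrow> real"
  assumes [measurable]: "a \<in> borel_measurable M" "b \<in> borel_measurable M"
    and "integrable M (\<lambda>x. (a x)\<^sup>2)" "integrable M (\<lambda>x. (b x)\<^sup>2)"
  shows "integrable M (\<lambda>x. a x * b x)"
proof (rule Bochner_Integration.integrable_bound[where f="\<lambda>x. (a x)\<^sup>2 + (b x)\<^sup>2"])
  show "integrable M (\<lambda>x. (a x)\<^sup>2 + (b x)\<^sup>2)" using assms by auto
  show "AE x in M. norm (a x * b x) \<le> norm ((a x)\<^sup>2 + (b x)\<^sup>2)"
  proof (intro AE_I2)
    fix x
    have h1: "2 * (\<bar>a x\<bar> * \<bar>b x\<bar>) \<le> (a x)\<^sup>2 + (b x)\<^sup>2"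
      using sum_squares_bound[of "\<bar>a x\<bar>" "\<bar>b x\<bar>"] by (simp add: mult.assoc)
    have h2: "0 \<le> \<bar>a x\<bar> * \<bar>b x\<bar>" by simp
    have "\<bar>a x * b x\<bar> \<le> (a x)\<^sup>2 + (b x)\<^sup>2" unfolding abs_mult using h1 h2 by linarith
    then show "norm (a x * b x) \<le> norm ((a x)\<^sup>2 + (b x)\<^sup>2)" by simp
  qed
qed simp

lemma L2_diff:
  fixes a b :: "'a \<Rightarrow> real"
  assumes [measurable]: "a \<in> borel_measurable M" "b \<in> borel_measurable M"
    and "integrable M (\<lambda>x. (a x)\<^sup>2)" "integrable M (\<lambda>x. (b x)\<^sup>2)"
  shows "integrable M (\<lambda>x. (a x - b x)\<^sup>2)"
proof -
  have "integrable M (\<lambda>x. (a x)\<^sup>2 + (b x)\<^sup>2 - 2 * (a x * b x))"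
    using L2_prod[OF assms] assms by auto
  then show ?thesis by (simp add: power2_diff mult.assoc)
qed

lemma proj_L2:
  fixes Y W :: "'a \<Rightarrow> real"
  assumes "prob_space M" "subalgebra M F"
    and [measurable]: "Y \<in> borel_measurable M" "W \<in> borel_measurable F"
    and Y2: "integrable M (\<lambda>x. (Y x)\<^sup>2)" and WY2: "integrable M (\<lambda>x. (W x - Y x)\<^sup>2)"
  shows "integrable M (\<lambda>x. (real_cond_exp M F Y x - Y x)\<^sup>2)"
    "(\<integral>x. (real_cond_exp M F Y x - Y x)\<^sup>2 \<partial>M) \<le> (\<integral>x. (W x - Y x)\<^sup>2 \<partial>M)"
proof -
  interpret prob_space M by fact
  interpret finite_measure_subalgebra M F
    by (simp add: assms(2) finite_measure_axioms finite_measure_subalgebra.intro finite_measure_subalgebra_axioms.intro)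
  have Wm[measurable]: "W \<in> borel_measurable M" using measurable_from_subalg[OF subalg assms(4)] .
  define C where "C = real_cond_exp M F Y"
  have Cm[measurable]: "C \<in> borel_measurable F" "C \<in> borel_measurable M" unfolding C_def by auto
  have Yi: "integrable M Y" using square_integrable_imp_integrable[OF _ Y2] by simp
  have C2: "integrable M (\<lambda>x. (C x)\<^sup>2)" unfolding C_def
    by (rule integrable_convex_cond_exp[where I=UNIV and q="\<lambda>x. x\<^sup>2"]) (auto simp: Yi Y2 Y2[unfolded power2_eq_square] convex_power2[unfolded power2_eq_square] power2_eq_square)
  have W2: "integrable M (\<lambda>x. (W x)\<^sup>2)"
    using L2_diff[of "\<lambda>x. W x - Y x" M "\<lambda>x. - Y x"] WY2 Y2 by simp
  have CY2: "integrable M (\<lambda>x. (C x - Y x)\<^sup>2)" using L2_diff[OF Cm(2) assms(3) C2 Y2] .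
  define f where "f = (\<lambda>x. W x - C x)"
  have fm[measurable]: "f \<in> borel_measurable F" "f \<in> borel_measurable M" unfolding f_def by auto
  have f2: "integrable M (\<lambda>x. (f x)\<^sup>2)" unfolding f_def using L2_diff[OF Wm Cm(2) W2 C2] .
  have fY: "integrable M (\<lambda>x. f x * Y x)" using L2_prod[OF fm(2) assms(3) f2 Y2] .
  have fC: "integrable M (\<lambda>x. f x * C x)" "(\<integral>x. f x * C x \<partial>M) = (\<integral>x. f x * Y x \<partial>M)"
    using real_cond_exp_intg[OF fY fm(1) assms(3)] unfolding C_def by auto
  have eq: "\<And>x. (W x - Y x)\<^sup>2 = (f x)\<^sup>2 + 2 * (f x * C x - f x * Y x) + (C x - Y x)\<^sup>2"
    unfolding f_def by (simp add: power2_eq_square algebra_simps)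
  have "(\<integral>x. (W x - Y x)\<^sup>2 \<partial>M) = (\<integral>x. (f x)\<^sup>2 + 2 * (f x * C x - f x * Y x) + (C x - Y x)\<^sup>2 \<partial>M)"
    unfolding eq ..
  also have "\<dots> = (\<integral>x. (f x)\<^sup>2 \<partial>M) + 2 * ((\<integral>x. f x * C x \<partial>M) - (\<integral>x. f x * Y x \<partial>M)) + (\<integral>x. (C x - Y x)\<^sup>2 \<partial>M)"
    using f2 fY fC(1) CY2 by simp
  also have "\<dots> = (\<integral>x. (f x)\<^sup>2 \<partial>M) + (\<integral>x. (C x - Y x)\<^sup>2 \<partial>M)" using fC(2) by simp
  also have "\<dots> \<ge> (\<integral>x. (C x - Y x)\<^sup>2 \<partial>M)" by simp
  finally show "(\<integral>x. (real_cond_exp M F Y x - Y x)\<^sup>2 \<partial>M) \<le> (\<integral>x. (W x - Y x)\<^sup>2 \<partial>M)"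
    unfolding C_def .
  show "integrable M (\<lambda>x. (real_cond_exp M F Y x - Y x)\<^sup>2)" using CY2 unfolding C_def .
qed

lemma vec_nth_meas[measurable (raw)]:
  "f \<in> borel_measurable M \<Longrightarrow> (\<lambda>x. (f x :: real^'n) $ i) \<in> borel_measurable M"
  by (rule measurable_compose[where g="\<lambda>x. x $ i"], assumption,
      rule borel_measurable_continuous_onI, intro continuous_intros)

lemma sfs: assumes "prob_space M" "subalgebra M F" shows "sigma_finite_subalgebra M F"
proof -
  interpret prob_space M by fact
  show ?thesis
    by (simp add: assms(2) finite_measure_subalgebra.intro finite_measure_subalgebra_axioms.intro
      finite_measure_subalgebra_is_sigma_finite finite_measure_axioms)
qed

lemma cond_L2:
  fixes f :: "'a \<Rightarrow> real"
  assumes "prob_space M" "subalgebra M F" and [measurable]: "f \<in> borel_measurable M"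
    and "integrable M (\<lambda>x. (f x)\<^sup>2)"
  shows "integrable M (\<lambda>x. (real_cond_exp M F f x)\<^sup>2)"
proof -
  interpret prob_space M by fact
  interpret sigma_finite_subalgebra M F using sfs assms by blast
  have fi: "integrable M f" using square_integrable_imp_integrable[OF _ assms(4)] by simp
  show ?thesis
    by (rule integrable_convex_cond_exp[where I=UNIV and q="\<lambda>x. x\<^sup>2"])
       (auto simp: fi assms(4) assms(4)[unfolded power2_eq_square] convex_power2[unfolded power2_eq_square] power2_eq_square)
qed

lemma normsq: "(norm (x::real^'n))\<^sup>2 = (\<Sum>i\<in>UNIV. (x$i)\<^sup>2)"
  unfolding power2_norm_eq_inner inner_vec_def by (simp add: power2_eq_square)

lemma comp_sq_int:
  fixes V :: "'a \<Rightarrow> real^'n"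
  assumes [measurable]: "V \<in> borel_measurable M" and "integrable M (\<lambda>x. (norm (V x))\<^sup>2)"
  shows "integrable M (\<lambda>x. (V x $ i)\<^sup>2)"
proof (rule Bochner_Integration.integrable_bound[OF assms(2)])
  show "AE x in M. norm ((V x $ i)\<^sup>2) \<le> norm ((norm (V x))\<^sup>2)"
  proof (intro AE_I2)
    fix x
    have "\<bar>V x $ i\<bar> \<le> \<bar>norm (V x)\<bar>" using component_le_norm_cart[of "V x" i] by simp
    then have "(V x $ i)\<^sup>2 \<le> (norm (V x))\<^sup>2" by (simp only: abs_le_square_iff)
    then show "norm ((V x $ i)\<^sup>2) \<le> norm ((norm (V x))\<^sup>2)" by simp
  qed
qed simp

lemma side:
  fixes Z Y W :: "'a \<Rightarrow> real^'d"
  assumes P: "prob_space M" and H: "subalgebra M H" and G: "subalgebra H G"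
    and Zm[measurable]: "Z \<in> borel_measurable M" and Z2: "integrable M (\<lambda>x. (norm (Z x))\<^sup>2)"
    and Ym[measurable]: "Y \<in> borel_measurable M"
    and ZY: "AE x in M. \<forall>i. real_cond_exp M H (\<lambda>x. Z x $ i) x = Y x $ i"
    and Wm[measurable]: "W \<in> borel_measurable G" and WY: "integrable M (\<lambda>x. (norm (W x - Y x))\<^sup>2)"
  shows "AE x in M. (\<chi> i. real_cond_exp M G (\<lambda>x. Z x $ i) x) = (\<chi> i. real_cond_exp M G (\<lambda>x. Y x $ i) x)"
    "integrable M (\<lambda>x. (norm ((\<chi> i. real_cond_exp M G (\<lambda>x. Y x $ i) x) - Y x))\<^sup>2)"
    "(\<integral>x. (norm ((\<chi> i. real_cond_exp M G (\<lambda>x. Y x $ i) x) - Y x))\<^sup>2 \<partial>M) \<le> (\<integral>x. (norm (W x - Y x))\<^sup>2 \<partial>M)"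
proof -
  interpret prob_space M by fact
  have GM: "subalgebra M G" using H G unfolding subalgebra_def by auto
  interpret sigma_finite_subalgebra M G using sfs P GM by blast
  have Zi2: "integrable M (\<lambda>x. (Z x $ i)\<^sup>2)" for i using comp_sq_int[OF Zm Z2] .
  have Zi: "integrable M (\<lambda>x. Z x $ i)" for i using square_integrable_imp_integrable[OF _ Zi2] by simp
  have ZYi: "AE x in M. real_cond_exp M H (\<lambda>x. Z x $ i) x = Y x $ i" for i using ZY by auto
  have Yi2: "integrable M (\<lambda>x. (Y x $ i)\<^sup>2)" for i
  proof -
    have "integrable M (\<lambda>x. (real_cond_exp M H (\<lambda>x. Z x $ i) x)\<^sup>2)"
      using cond_L2[OF P H _ Zi2] by simp
    moreover have "AE x in M. (real_cond_exp M H (\<lambda>x. Z x $ i) x)\<^sup>2 = (Y x $ i)\<^sup>2"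
      using ZYi[of i] by auto
    ultimately show ?thesis
      using integrable_cong_AE[of "\<lambda>x. (real_cond_exp M H (\<lambda>x. Z x $ i) x)\<^sup>2" M "\<lambda>x. (Y x $ i)\<^sup>2"]
      by (simp add: borel_measurable_cond_exp2)
  qed
  have Yi: "integrable M (\<lambda>x. Y x $ i)" for i using square_integrable_imp_integrable[OF _ Yi2] by simp
  have A1: "AE x in M. real_cond_exp M G (\<lambda>x. Z x $ i) x = real_cond_exp M G (\<lambda>x. Y x $ i) x" for i
  proof -
    have "AE x in M. real_cond_exp M G (real_cond_exp M H (\<lambda>x. Z x $ i)) x = real_cond_exp M G (\<lambda>x. Z x $ i) x"
      by (rule real_cond_exp_nested_subalg[OF H G Zi])
    moreover have "AE x in M. real_cond_exp M G (real_cond_exp M H (\<lambda>x. Z x $ i)) x = real_cond_exp M G (\<lambda>x. Y x $ i) x"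
      by (rule real_cond_exp_cong[OF ZYi]) (auto simp: borel_measurable_cond_exp2)
    ultimately show ?thesis by auto
  qed
  show "AE x in M. (\<chi> i. real_cond_exp M G (\<lambda>x. Z x $ i) x) = (\<chi> i. real_cond_exp M G (\<lambda>x. Y x $ i) x)"
  proof -
    have "AE x in M. \<forall>i. real_cond_exp M G (\<lambda>x. Z x $ i) x = real_cond_exp M G (\<lambda>x. Y x $ i) x"
      unfolding AE_all_countable using A1 by blast
    then show ?thesis by (rule eventually_mono) (simp add: vec_eq_iff)
  qed
  have WmM[measurable]: "W \<in> borel_measurable M" using measurable_from_subalg[OF GM Wm] .
  have WYi2: "integrable M (\<lambda>x. (W x $ i - Y x $ i)\<^sup>2)" for i
    using comp_sq_int[of "\<lambda>x. W x - Y x" M i] WY by simp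
  have Wim: "(\<lambda>x. W x $ i) \<in> borel_measurable G" for i by measurable
  note pr = proj_L2[OF P GM _ Wim Yi2 WYi2]
  have eqA: "(norm ((\<chi> i. real_cond_exp M G (\<lambda>x. Y x $ i) x) - Y x))\<^sup>2
      = (\<Sum>i\<in>UNIV. (real_cond_exp M G (\<lambda>x. Y x $ i) x - Y x $ i)\<^sup>2)" for x
    unfolding normsq by simp
  have eqW: "(norm (W x - Y x))\<^sup>2 = (\<Sum>i\<in>UNIV. (W x $ i - Y x $ i)\<^sup>2)" for x
    unfolding normsq by simp
  show "integrable M (\<lambda>x. (norm ((\<chi> i. real_cond_exp M G (\<lambda>x. Y x $ i) x) - Y x))\<^sup>2)"
    unfolding eqA using pr(1) by (intro Bochner_Integration.integrable_sum) simp
  have "(\<integral>x. (norm ((\<chi> i. real_cond_exp M G (\<lambda>x. Y x $ i) x) - Y x))\<^sup>2 \<partial>M)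
      = (\<Sum>i\<in>UNIV. (\<integral>x. (real_cond_exp M G (\<lambda>x. Y x $ i) x - Y x $ i)\<^sup>2 \<partial>M))"
    unfolding eqA using pr(1) by (intro Bochner_Integration.integral_sum) simp
  also have "\<dots> \<le> (\<Sum>i\<in>UNIV. (\<integral>x. (W x $ i - Y x $ i)\<^sup>2 \<partial>M))"
    using pr(2) by (intro sum_mono) simp
  also have "\<dots> = (\<integral>x. (norm (W x - Y x))\<^sup>2 \<partial>M)"
    unfolding eqW using WYi2 by (intro Bochner_Integration.integral_sum[symmetric]) simp
  finally show "(\<integral>x. (norm ((\<chi> i. real_cond_exp M G (\<lambda>x. Y x $ i) x) - Y x))\<^sup>2 \<partial>M) \<le> (\<integral>x. (norm (W x - Y x))\<^sup>2 \<partial>M)" .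
qed

lemma unit_diff_sq:
  fixes x y :: "real^'m"
  assumes "norm x = 1" "norm y = 1"
  shows "(norm (x - y))\<^sup>2 = 2 * cos_dist x y"
proof -
  have "(norm (x - y))\<^sup>2 = (norm x)\<^sup>2 + (norm y)\<^sup>2 - 2 * inner x y"
    unfolding power2_norm_eq_inner by (simp add: inner_diff_left inner_diff_right inner_commute)
  then show ?thesis using assms unfolding cos_dist_def by simp
qed

theorem theorem1:
  fixes M :: "'a measure"
    and Xl Xp :: "'a \<Rightarrow> real^'m"
    and Z :: "'a \<Rightarrow> real^'d"
    and h :: "real^'m \<Rightarrow> real^'m \<Rightarrow> real^'d"
    and \<alpha> \<beta> \<epsilon> :: real
  assumes "prob_space M"
    and "Xl \<in> borel_measurable M" and "Xp \<in> borel_measurable M"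
    and "AE \<omega> in M. norm (Xl \<omega>) = 1" and "AE \<omega> in M. norm (Xp \<omega>) = 1"
    and "Z \<in> borel_measurable M" and "integrable M (\<lambda>\<omega>. (norm (Z \<omega>))\<^sup>2)"
    and "\<epsilon> > 0"
    and "(\<integral>\<omega>. cos_dist (Xl \<omega>) (Xp \<omega>) \<partial>M) < \<epsilon> / 2"
    and "AE \<omega> in M. cond_exp_vec M (\<lambda>\<omega>'. (Xl \<omega>', Xp \<omega>')) Z \<omega> = h (Xl \<omega>) (Xp \<omega>)"
    and "\<alpha> > 0" and "\<beta> > 0"
    and "\<forall>y. lipschitz_on \<alpha> UNIV (\<lambda>x. h x y)"
    and "\<forall>x. lipschitz_on \<beta> UNIV (\<lambda>y. h x y)"
  shows "(\<integral>\<omega>. (norm (cond_exp_vec M Xl Z \<omega> - cond_exp_vec M Xp Z \<omega>))\<^sup>2 \<partial>M)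
           < 2 * (\<alpha>\<^sup>2 + \<beta>\<^sup>2) * \<epsilon>"
proof -
  note P = assms(1)
  interpret prob_space M by fact
  note Xlm[measurable] = assms(2) and Xpm[measurable] = assms(3) and Zm[measurable] = assms(6)
  have pm[measurable]: "(\<lambda>\<omega>. (Xl \<omega>, Xp \<omega>)) \<in> borel_measurable M" by measurable
  define Fl where "Fl = vimage_algebra (space M) Xl borel"
  define Fp where "Fp = vimage_algebra (space M) Xp borel"
  define Flp where "Flp = vimage_algebra (space M) (\<lambda>\<omega>. (Xl \<omega>, Xp \<omega>)) borel"
  have sub_lp: "subalgebra M Flp" unfolding subalgebra_def Flp_def
    using sets_image_in_sets[of M "space M" "\<lambda>\<omega>. (Xl \<omega>, Xp \<omega>)" borel] pm by simp
  have pmF: "(\<lambda>\<omega>. (Xl \<omega>, Xp \<omega>)) \<in> Flp \<rightarrow>\<^sub>M borel" unfolding Flp_def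
    by (rule measurable_vimage_algebra1) simp
  have fstm: "(fst :: (real^'m) \<times> (real^'m) \<Rightarrow> real^'m) \<in> borel_measurable borel"
    by (rule borel_measurable_continuous_onI) (intro continuous_intros)
  have sndm: "(snd :: (real^'m) \<times> (real^'m) \<Rightarrow> real^'m) \<in> borel_measurable borel"
    by (rule borel_measurable_continuous_onI) (intro continuous_intros)
  have XlF: "Xl \<in> Flp \<rightarrow>\<^sub>M borel"
    using measurable_compose[OF pmF fstm] by simp
  have XpF: "Xp \<in> Flp \<rightarrow>\<^sub>M borel"
    using measurable_compose[OF pmF sndm] by simp
  have sub_l: "subalgebra Flp Fl" unfolding subalgebra_def Fl_def
    using sets_image_in_sets[of Flp "space M" Xl borel] XlF by (simp add: Flp_def)
  have sub_p: "subalgebra Flp Fp" unfolding subalgebra_def Fp_def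
    using sets_image_in_sets[of Flp "space M" Xp borel] XpF by (simp add: Flp_def)
  have dh: "dist (h a b) (h c d) \<le> \<alpha> * dist a c + \<beta> * dist b d" for a b c d
  proof -
    have "dist (h a b) (h c d) \<le> dist (h a b) (h c b) + dist (h c b) (h c d)" by (rule dist_triangle)
    also have "dist (h a b) (h c b) \<le> \<alpha> * dist a c"
      using lipschitz_onD[of \<alpha> UNIV "\<lambda>x. h x b" a c] assms(13) by simp
    also have "dist (h c b) (h c d) \<le> \<beta> * dist b d"
      using lipschitz_onD[of \<beta> UNIV "\<lambda>y. h c y" b d] assms(14) by simp
    finally show ?thesis by simp
  qed
  have Hc: "continuous_on UNIV (\<lambda>p. h (fst p) (snd p))"
  proof (rule lipschitz_on_continuous_on[where L="\<alpha> + \<beta>"], rule lipschitz_onI)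
    fix p q :: "(real^'m) \<times> (real^'m)"
    have "dist (h (fst p) (snd p)) (h (fst q) (snd q)) \<le> \<alpha> * dist (fst p) (fst q) + \<beta> * dist (snd p) (snd q)"
      by (rule dh)
    also have "\<dots> \<le> \<alpha> * dist p q + \<beta> * dist p q"
      using dist_fst_le[of p q] dist_snd_le[of p q] assms(11,12)
      by (intro add_mono mult_left_mono) auto
    finally show "dist (h (fst p) (snd p)) (h (fst q) (snd q)) \<le> (\<alpha> + \<beta>) * dist p q"
      by (simp add: algebra_simps)
  qed (use assms(11,12) in auto)
  have Hm: "(\<lambda>p. h (fst p) (snd p)) \<in> borel_measurable borel"
    by (rule borel_measurable_continuous_onI[OF Hc])
  have hm: "(\<lambda>x. h (f x) (g x)) \<in> borel_measurable N"
    if "f \<in> borel_measurable N" "g \<in> borel_measurable N" for N :: "'b measure" and f g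
    using measurable_compose[OF borel_measurable_Pair[OF that] Hm] by simp
  define Y where "Y = (\<lambda>\<omega>. h (Xl \<omega>) (Xp \<omega>))"
  have Ym[measurable]: "Y \<in> borel_measurable M" unfolding Y_def by (rule hm) auto
  have ZY: "AE x in M. \<forall>i. real_cond_exp M Flp (\<lambda>x. Z x $ i) x = Y x $ i"
    using assms(10) by (rule eventually_mono) (simp add: cond_exp_vec_def Flp_def Y_def vec_eq_iff)
  have XlFl: "Xl \<in> Fl \<rightarrow>\<^sub>M borel" unfolding Fl_def by (rule measurable_vimage_algebra1) simp
  have XpFp: "Xp \<in> Fp \<rightarrow>\<^sub>M borel" unfolding Fp_def by (rule measurable_vimage_algebra1) simp
  define Wl where "Wl = (\<lambda>\<omega>. h (Xl \<omega>) (Xl \<omega>))"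
  define Wp where "Wp = (\<lambda>\<omega>. h (Xp \<omega>) (Xp \<omega>))"
  have Wlm: "Wl \<in> borel_measurable Fl" unfolding Wl_def by (rule hm[OF XlFl XlFl])
  have Wpm: "Wp \<in> borel_measurable Fp" unfolding Wp_def by (rule hm[OF XpFp XpFp])
  define D where "D = (\<lambda>\<omega>. (norm (Xl \<omega> - Xp \<omega>))\<^sup>2)"
  have Dm[measurable]: "D \<in> borel_measurable M" unfolding D_def by measurable
  have Dint: "integrable M D"
  proof (rule Bochner_Integration.integrable_bound[OF integrable_const[of 4]])
    show "AE x in M. norm (D x) \<le> norm (4::real)"
      using assms(4,5)
    proof (eventually_elim)
      case (elim x)
      have "norm (Xl x - Xp x) \<le> norm (Xl x) + norm (Xp x)" by (rule norm_triangle_ineq4)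
      then have "norm (Xl x - Xp x) \<le> 2" using elim by simp
      then have "(norm (Xl x - Xp x))\<^sup>2 \<le> 2\<^sup>2" by (intro power_mono) auto
      then show ?case unfolding D_def by simp
    qed
  qed simp
  have DAE: "AE x in M. D x = 2 * cos_dist (Xl x) (Xp x)"
    using assms(4,5) by eventually_elim (simp add: D_def unit_diff_sq)
  have cm: "(\<lambda>x. 2 * cos_dist (Xl x) (Xp x)) \<in> borel_measurable M"
    unfolding cos_dist_def by measurable
  have intD: "(\<integral>x. D x \<partial>M) < \<epsilon>"
  proof -
    have "(\<integral>x. D x \<partial>M) = (\<integral>x. 2 * cos_dist (Xl x) (Xp x) \<partial>M)"
      by (rule integral_cong_AE[OF Dm cm DAE])
    also have "\<dots> = 2 * (\<integral>x. cos_dist (Xl x) (Xp x) \<partial>M)" by simp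
    finally show ?thesis using assms(9) by simp
  qed
  have D0: "0 \<le> D x" for x unfolding D_def by simp
  have bl: "(norm (Wl x - Y x))\<^sup>2 \<le> \<beta>\<^sup>2 * D x" for x
  proof -
    have "norm (Wl x - Y x) \<le> \<beta> * norm (Xl x - Xp x)" unfolding Wl_def Y_def
      using lipschitz_on_normD[of \<beta> UNIV "\<lambda>y. h (Xl x) y" "Xl x" "Xp x"] assms(14) by simp
    then have "(norm (Wl x - Y x))\<^sup>2 \<le> (\<beta> * norm (Xl x - Xp x))\<^sup>2" by (intro power_mono) auto
    then show ?thesis unfolding D_def by (simp add: power_mult_distrib)
  qed
  have bp: "(norm (Wp x - Y x))\<^sup>2 \<le> \<alpha>\<^sup>2 * D x" for x
  proof -
    have "norm (Wp x - Y x) \<le> \<alpha> * norm (Xp x - Xl x)" unfolding Wp_def Y_def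
      using lipschitz_on_normD[of \<alpha> UNIV "\<lambda>y. h y (Xp x)" "Xp x" "Xl x"] assms(13) by simp
    then have "(norm (Wp x - Y x))\<^sup>2 \<le> (\<alpha> * norm (Xp x - Xl x))\<^sup>2" by (intro power_mono) auto
    then show ?thesis unfolding D_def by (simp add: power_mult_distrib norm_minus_commute)
  qed
  have WlmM[measurable]: "Wl \<in> borel_measurable M" unfolding Wl_def by (rule hm) auto
  have WpmM[measurable]: "Wp \<in> borel_measurable M" unfolding Wp_def by (rule hm) auto
  have WYl: "integrable M (\<lambda>x. (norm (Wl x - Y x))\<^sup>2)"
    by (rule Bochner_Integration.integrable_bound[where f="\<lambda>x. \<beta>\<^sup>2 * D x"])
       (use Dint bl D0 in auto)
  have WYp: "integrable M (\<lambda>x. (norm (Wp x - Y x))\<^sup>2)"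
    by (rule Bochner_Integration.integrable_bound[where f="\<lambda>x. \<alpha>\<^sup>2 * D x"])
       (use Dint bp D0 in auto)
  note Sl = side[OF P sub_lp sub_l Zm assms(7) Ym ZY Wlm WYl]
  note Sp = side[OF P sub_lp sub_p Zm assms(7) Ym ZY Wpm WYp]
  define Al where "Al = (\<lambda>x. \<chi> i. real_cond_exp M Fl (\<lambda>x. Y x $ i) x)"
  define Ap where "Ap = (\<lambda>x. \<chi> i. real_cond_exp M Fp (\<lambda>x. Y x $ i) x)"
  have ineq: "(norm (a - b))\<^sup>2 \<le> 2 * (norm (a - y))\<^sup>2 + 2 * (norm (b - y))\<^sup>2" for a b y :: "real^'d"
  proof -
    have "norm (a - b) \<le> norm (a - y) + norm (b - y)"
      using norm_triangle_ineq4[of "a - y" "b - y"] by simp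
    then have "(norm (a - b))\<^sup>2 \<le> (norm (a - y) + norm (b - y))\<^sup>2" by (intro power_mono) auto
    also have "\<dots> \<le> 2 * (norm (a - y))\<^sup>2 + 2 * (norm (b - y))\<^sup>2"
      using sum_squares_bound[of "norm (a - y)" "norm (b - y)"] by (simp add: power2_sum)
    finally show ?thesis .
  qed
  have "(\<integral>\<omega>. (norm (cond_exp_vec M Xl Z \<omega> - cond_exp_vec M Xp Z \<omega>))\<^sup>2 \<partial>M)
      \<le> (\<integral>\<omega>. 2 * (norm (Al \<omega> - Y \<omega>))\<^sup>2 + 2 * (norm (Ap \<omega> - Y \<omega>))\<^sup>2 \<partial>M)"
  proof (rule integral_mono_AE')
    show "integrable M (\<lambda>\<omega>. 2 * (norm (Al \<omega> - Y \<omega>))\<^sup>2 + 2 * (norm (Ap \<omega> - Y \<omega>))\<^sup>2)"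
      using Sl(2) Sp(2) unfolding Al_def Ap_def by auto
    show "AE x in M. 0 \<le> 2 * (norm (Al x - Y x))\<^sup>2 + 2 * (norm (Ap x - Y x))\<^sup>2" by simp
    show "AE x in M. (norm (cond_exp_vec M Xl Z x - cond_exp_vec M Xp Z x))\<^sup>2
        \<le> 2 * (norm (Al x - Y x))\<^sup>2 + 2 * (norm (Ap x - Y x))\<^sup>2"
      using Sl(1) Sp(1)
      by eventually_elim (simp add: cond_exp_vec_def Fl_def Fp_def Al_def Ap_def ineq)
  qed
  also have "\<dots> = 2 * (\<integral>\<omega>. (norm (Al \<omega> - Y \<omega>))\<^sup>2 \<partial>M) + 2 * (\<integral>\<omega>. (norm (Ap \<omega> - Y \<omega>))\<^sup>2 \<partial>M)"
    using Sl(2) Sp(2) unfolding Al_def Ap_def by simp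
  also have "\<dots> \<le> 2 * (\<integral>\<omega>. (norm (Wl \<omega> - Y \<omega>))\<^sup>2 \<partial>M) + 2 * (\<integral>\<omega>. (norm (Wp \<omega> - Y \<omega>))\<^sup>2 \<partial>M)"
    using Sl(3) Sp(3) unfolding Al_def Ap_def by simp
  also have "\<dots> \<le> 2 * (\<integral>\<omega>. \<beta>\<^sup>2 * D \<omega> \<partial>M) + 2 * (\<integral>\<omega>. \<alpha>\<^sup>2 * D \<omega> \<partial>M)"
    using integral_mono[OF WYl _ bl] integral_mono[OF WYp _ bp] Dint by simp
  also have "\<dots> = 2 * (\<alpha>\<^sup>2 + \<beta>\<^sup>2) * (\<integral>\<omega>. D \<omega> \<partial>M)" by (simp add: algebra_simps)
  also have "\<dots> < 2 * (\<alpha>\<^sup>2 + \<beta>\<^sup>2) * \<epsilon>"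
  proof (intro mult_strict_left_mono intD)
    show "0 < 2 * (\<alpha>\<^sup>2 + \<beta>\<^sup>2)"
      by (intro mult_pos_pos add_pos_nonneg) (use assms(11) in auto)
  qed
  finally show ?thesis .
qed
end
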